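(* Let $(\mathcal{G},c)$ be a colored directed acyclic graph with compatible coloring, and assume that $c(i)=c(j)$ implies $(\mathcal{G}_i,c)\cong(\mathcal{G}_j,c)$ for all vertices $i,j$. Then there exists an inverse topological order $\succ$ of $V$ in which each vertex color class forms a consecutive block, i.e. $i\succ j\succ k$ and $c(i)=c(k)$ imply $c(j)=c(i)$.
   Context: $\mathcal{G}=(V,\vec E)$ is a finite DAG; $j\to i$ means $(j,i)\in\vec E$. A coloring is $c:V\cup\vec E\to[r+R]$; compatible means $c(V)\cap c(\vec E)=\emptyset$ and $c(j\to i)=c(l\to k)$ implies $c(i)=c(k)$. $\mathrm{ch}(i)=\{k:i\to k\}$; $(\mathcal{G}_i,c)$ is the colored graph on $\{i\}\cup\mathrm{ch}(i)$ with edges $i\to k$, $k\in\mathrm{ch}(i)$, and colors inherited from $c$; $\cong$ is isomorphism of colored graphs. An inverse topological order is a total order $\succ$ on $V$ such that $j\to i$ implies $j\succ i$. *)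

theory Defs
  imports Main
begin

text \<open>A finite DAG on vertex set V with edge set E (pairs (j,i) meaning j \<rightarrow> i).\<close>
definition finite_dag :: "'a set \<Rightarrow> ('a \<times> 'a) set \<Rightarrow> bool" where
  "finite_dag V E \<longleftrightarrow> finite V \<and> E \<subseteq> V \<times> V \<and> acyclic E"

text \<open>A coloring c of V \<union> E is split into its vertex part cV and edge part cE.\<close>
definition compatible_coloring ::
  "'a set \<Rightarrow> ('a \<times> 'a) set \<Rightarrow> ('a \<Rightarrow> 'c) \<Rightarrow> ('a \<times> 'a \<Rightarrow> 'c) \<Rightarrow> bool" where
  "compatible_coloring V E cV cE \<longleftrightarrow>
     cV ` V \<inter> cE ` E = {} \<and>
     (\<forall>e\<in>E. \<forall>e'\<in>E. cE e = cE e' \<longrightarrow> cV (snd e) = cV (snd e'))"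

definition children :: "('a \<times> 'a) set \<Rightarrow> 'a \<Rightarrow> 'a set" where
  "children E i = {k. (i, k) \<in> E}"

definition local_vertices :: "('a \<times> 'a) set \<Rightarrow> 'a \<Rightarrow> 'a set" where
  "local_vertices E i = insert i (children E i)"

definition local_edges :: "('a \<times> 'a) set \<Rightarrow> 'a \<Rightarrow> ('a \<times> 'a) set" where
  "local_edges E i = {(i, k) | k. k \<in> children E i}"

definition local_iso ::
  "('a \<times> 'a) set \<Rightarrow> ('a \<Rightarrow> 'c) \<Rightarrow> ('a \<times> 'a \<Rightarrow> 'c) \<Rightarrow> 'a \<Rightarrow> 'a \<Rightarrow> bool" where
  "local_iso E cV cE i j \<longleftrightarrow>
     (\<exists>f. bij_betw f (local_vertices E i) (local_vertices E j) \<and>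
          (\<forall>x\<in>local_vertices E i. \<forall>y\<in>local_vertices E i.
              (x, y) \<in> local_edges E i \<longleftrightarrow> (f x, f y) \<in> local_edges E j) \<and>
          (\<forall>x\<in>local_vertices E i. cV (f x) = cV x) \<and>
          (\<forall>(x, y)\<in>local_edges E i. cE (f x, f y) = cE (x, y)))"

text \<open>Inverse topological order: strict total order R on V ((j,i) \<in> R means j \<succ> i)
  such that j \<rightarrow> i implies j \<succ> i.\<close>
definition inverse_topological_order :: "'a set \<Rightarrow> ('a \<times> 'a) set \<Rightarrow> ('a \<times> 'a) set \<Rightarrow> bool" where
  "inverse_topological_order V E R \<longleftrightarrow>
     R \<subseteq> V \<times> V \<and> strict_linear_order_on V R \<and> E \<subseteq> R"

end

theory Submission
  imports Defs
begin

lemma height_exists: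
  assumes fin: "finite V" and sub: "E \<subseteq> V \<times> V" and ac: "acyclic E"
  shows "\<exists>h::'a \<Rightarrow> nat. (\<forall>v k. (v, k) \<in> E \<longrightarrow> h k < h v) \<and>
           (\<forall>v. 0 < h v \<longrightarrow> (\<exists>k. (v, k) \<in> E \<and> h v = Suc (h k)))"
proof -
  have finE: "finite E" using fin sub finite_subset by blast
  have wf: "wf (E\<inverse>)" using finite_acyclic_wf_converse[OF finE ac] .
  define F where "F = (\<lambda>(f::'a \<Rightarrow> nat) v. Max (insert 0 ((\<lambda>k. Suc (f k)) ` children E v)))"
  define h where "h = wfrec (E\<inverse>) F"
  have finc: "\<And>v. finite (children E v)"
    proof -
    fix v have "children E v \<subseteq> V" using sub by (auto simp: children_def)
    thus "finite (children E v)" using fin finite_subset by blast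
  qed
  have eq: "\<And>v. h v = Max (insert 0 ((\<lambda>k. Suc (h k)) ` children E v))"
  proof -
    fix v
    have "h v = F (cut h (E\<inverse>) v) v" using def_wfrec[OF h_def[THEN eq_reflection] wf] .
    also have "(\<lambda>k. Suc (cut h (E\<inverse>) v k)) ` children E v = (\<lambda>k. Suc (h k)) ` children E v"
      by (rule image_cong) (auto simp: children_def cut_apply)
    ultimately show "h v = Max (insert 0 ((\<lambda>k. Suc (h k)) ` children E v))"
      by (simp add: F_def)
  qed
  have 1: "\<forall>v k. (v, k) \<in> E \<longrightarrow> h k < h v"
  proof (intro allI impI)
    fix v k assume "(v, k) \<in> E"
    hence "Suc (h k) \<in> insert 0 ((\<lambda>k. Suc (h k)) ` children E v)" by (auto simp: children_def)
    hence "Suc (h k) \<le> h v" using eq[of v] finc[of v] by (metis Max_ge finite_imageI finite_insert)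
    thus "h k < h v" by simp
  qed
  have 2: "\<forall>v. 0 < h v \<longrightarrow> (\<exists>k. (v, k) \<in> E \<and> h v = Suc (h k))"
  proof (intro allI impI)
    fix v assume pos: "0 < h v"
    have "h v \<in> insert 0 ((\<lambda>k. Suc (h k)) ` children E v)"
      using eq[of v] finc[of v] by (metis Max_in finite_imageI finite_insert insert_not_empty)
    thus "\<exists>k. (v, k) \<in> E \<and> h v = Suc (h k)" using pos by (auto simp: children_def)
  qed
  show ?thesis using 1 2 by blast
qed

theorem lemma7p12:
  fixes V :: "'a set" and E :: "('a \<times> 'a) set"
    and cV :: "'a \<Rightarrow> nat" and cE :: "'a \<times> 'a \<Rightarrow> nat"
  assumes "finite_dag V E"
    and "compatible_coloring V E cV cE"
    and "\<forall>i\<in>V. \<forall>j\<in>V. cV i = cV j \<longrightarrow> local_iso E cV cE i j"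
  shows "\<exists>R. inverse_topological_order V E R \<and>
           (\<forall>i j k. (i, j) \<in> R \<and> (j, k) \<in> R \<and> cV i = cV k \<longrightarrow> cV j = cV i)"
proof -
  have fin: "finite V" and sub: "E \<subseteq> V \<times> V" and ac: "acyclic E"
    using assms(1) by (auto simp: finite_dag_def)
  obtain h :: "'a \<Rightarrow> nat" where h1: "\<And>v k. (v, k) \<in> E \<Longrightarrow> h k < h v"
    and h2: "\<And>v. 0 < h v \<Longrightarrow> \<exists>k. (v, k) \<in> E \<and> h v = Suc (h k)"
    using height_exists[OF fin sub ac] by blast
  have child: "\<exists>k'. (j, k') \<in> E \<and> cV k' = cV k"
    if "i \<in> V" "j \<in> V" "cV i = cV j" "(i, k) \<in> E" for i j k
  proof -
    from assms(3) that(1-3) have "local_iso E cV cE i j" by blast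
    then obtain f where bij: "bij_betw f (local_vertices E i) (local_vertices E j)"
      and ed: "\<forall>x\<in>local_vertices E i. \<forall>y\<in>local_vertices E i.
              (x, y) \<in> local_edges E i \<longleftrightarrow> (f x, f y) \<in> local_edges E j"
      and col: "\<forall>x\<in>local_vertices E i. cV (f x) = cV x"
      unfolding local_iso_def by blast
    have iv: "i \<in> local_vertices E i" "k \<in> local_vertices E i"
      using that(4) by (auto simp: local_vertices_def children_def)
    have "(i, k) \<in> local_edges E i" using that(4) by (auto simp: local_edges_def children_def)
    hence "(f i, f k) \<in> local_edges E j" using ed iv by blast
    hence "(j, f k) \<in> E" by (auto simp: local_edges_def children_def)
    thus ?thesis using col iv by blast
  qed
  have same: "\<forall>i j. i \<in> V \<and> j \<in> V \<and> cV i = cV j \<and> h i + h j = n \<longrightarrow> h i \<le> h j" for n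
  proof (induction n rule: less_induct)
    case (less n)
    show ?case
    proof (intro allI impI)
      fix i j assume a: "i \<in> V \<and> j \<in> V \<and> cV i = cV j \<and> h i + h j = n"
      show "h i \<le> h j"
      proof (cases "h i = 0")
        case True thus ?thesis by simp
      next
        case False
        then obtain k where k: "(i, k) \<in> E" "h i = Suc (h k)" using h2 by blast
        then obtain k' where k': "(j, k') \<in> E" "cV k' = cV k" using child a by blast
        have kv: "k \<in> V" "k' \<in> V" using k k' sub by auto
        have lt: "h k' < h j" using h1 k' by blast
        have "h k' \<le> h k" using less[rule_format, of "h k' + h k" k' k] kv k' k lt a by simp
        moreover have "h k \<le> h k'" using less[rule_format, of "h k + h k'" k k'] kv k' k lt a by simp
        ultimately show ?thesis using k lt by simp
      qed
    qed
  qed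
  have sameh: "\<And>i j. i \<in> V \<Longrightarrow> j \<in> V \<Longrightarrow> cV i = cV j \<Longrightarrow> h i = h j"
    using same by (metis le_antisym)
  obtain g where g: "bij_betw g V {0..<card V}" using ex_bij_betw_finite_nat[OF fin] by blast
  have ginj: "\<And>x y. x \<in> V \<Longrightarrow> y \<in> V \<Longrightarrow> g x = g y \<Longrightarrow> x = y"
    using g unfolding bij_betw_def inj_on_def by blast
  define R where "R = {(x, y). x \<in> V \<and> y \<in> V \<and> (h y < h x \<or> (h y = h x \<and> (cV y < cV x \<or> (cV y = cV x \<and> g y < g x))))}"
  have "R \<subseteq> V \<times> V" unfolding R_def by auto
  moreover have "trans R" unfolding R_def trans_def by auto
  moreover have "irrefl R" unfolding R_def irrefl_def by auto
  moreover have "total_on V R" unfolding total_on_def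
  proof (intro ballI impI)
    fix x y assume xy: "x \<in> V" "y \<in> V" "x \<noteq> y"
    hence "g x \<noteq> g y" using ginj by blast
    thus "(x, y) \<in> R \<or> (y, x) \<in> R" using xy unfolding R_def by auto
  qed
  moreover have "E \<subseteq> R" unfolding R_def using sub h1 by auto
  ultimately have "inverse_topological_order V E R"
    unfolding inverse_topological_order_def strict_linear_order_on_def by blast
  moreover have "\<forall>i j k. (i, j) \<in> R \<and> (j, k) \<in> R \<and> cV i = cV k \<longrightarrow> cV j = cV i"
  proof (intro allI impI)
    fix i j k assume a: "(i, j) \<in> R \<and> (j, k) \<in> R \<and> cV i = cV k"
    hence v: "i \<in> V" "j \<in> V" "k \<in> V" unfolding R_def by auto
    have "h i = h k" using sameh v a by blast
    moreover have "h j < h i \<or> (h j = h i \<and> cV j \<le> cV i)"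
      using a unfolding R_def by auto
    moreover have "h k < h j \<or> (h k = h j \<and> cV k \<le> cV j)"
      using a unfolding R_def by auto
    ultimately show "cV j = cV i" using a by linarith
  qed
  ultimately show ?thesis by blast
qed

end
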